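(* Each of the sets $\{1,2,3\}$, $\{1,2,3,4\}$, $\{1,2,3,4,5\}$, $\{1,2,3,4,6\}$, $\{1,2,3,4,5,6\}$ belongs to $\mathcal{I}_1$.
   Context: For a summable sequence $\mathbf{x}=(x_n)$ of positive reals, $\mathcal{A}(\mathbf{x})=\{\sum_{n\in A}x_n: A\subseteq\mathbb{N}\}$ is its achievement set and its cardinal function $f$ assigns to $x\in\mathcal{A}(\mathbf{x})$ the cardinality (a positive integer, $\omega$, or $\mathfrak{c}$) of $\{(\varepsilon_n)\in\{0,1\}^{\mathbb{N}}:\sum\varepsilon_nx_n=x\}$. $\mathcal{I}_1$ is the family of ranges of cardinal functions of such sequences whose achievement set is a single closed interval. *)

theory Defs
  imports "HOL-Analysis.Analysis"
begin

datatype cardval = Fin nat | Omega | Continuum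

definition subsum :: "(nat \<Rightarrow> real) \<Rightarrow> nat set \<Rightarrow> real" where
  "subsum x A = (\<Sum>n. if n \<in> A then x n else 0)"

definition achievement_set :: "(nat \<Rightarrow> real) \<Rightarrow> real set" where
  "achievement_set x = {subsum x A | A. A \<subseteq> UNIV}"

text \<open>Cardinality of a set of 0-1 sequences (identified with subsets of nat).
  These sets are closed in Cantor space, so an uncountable one has size continuum.\<close>
definition cardval_of :: "nat set set \<Rightarrow> cardval" where
  "cardval_of S = (if finite S then Fin (card S) else if countable S then Omega else Continuum)"

definition cardinal_function :: "(nat \<Rightarrow> real) \<Rightarrow> real \<Rightarrow> cardval" where
  "cardinal_function x y = cardval_of {A. subsum x A = y}"

definition I1 :: "cardval set set" where
  "I1 = {R. \<exists>x :: nat \<Rightarrow> real. (\<forall>n. x n > 0) \<and> summable x \<and>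
            (\<exists>a b. a \<le> b \<and> achievement_set x = {a..b}) \<and>
            R = cardinal_function x ` achievement_set x}"

end

theory Submission
  imports Defs
begin


definition tt :: "nat \<Rightarrow> real" where "tt n = (1/2)^Suc n"

abbreviation ss :: "nat set \<Rightarrow> real" where "ss B \<equiv> subsum tt B"

lemma tt_pos: "tt n > 0" by (simp add: tt_def)

lemma summable_tt: "summable tt"
  using power_half_series unfolding tt_def by (simp add: sums_summable)

lemma summable_ind: "summable (\<lambda>n. if n \<in> B then tt n else 0)"
  by (rule summable_comparison_test'[OF summable_tt, of 0]) (auto simp: tt_pos less_imp_le)

lemma ss_UNIV: "ss UNIV = 1"
  unfolding subsum_def tt_def using sums_unique[OF power_half_series, symmetric] by simp

lemma ss_nonneg: "ss B \<ge> 0"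
  unfolding subsum_def by (rule suminf_nonneg[OF summable_ind]) (auto simp: tt_pos less_imp_le)

lemma ss_union: "B \<inter> C = {} \<Longrightarrow> ss (B \<union> C) = ss B + ss C"
proof -
  assume d: "B \<inter> C = {}"
  have "(\<lambda>n. if n \<in> B \<union> C then tt n else 0) = (\<lambda>n. (if n \<in> B then tt n else 0) + (if n \<in> C then tt n else 0))"
    using d by (auto simp: fun_eq_iff)
  then show ?thesis unfolding subsum_def
    using suminf_add[OF summable_ind summable_ind, of B C] by simp
qed

lemma ss_zero: "ss B = 0 \<Longrightarrow> B = {}"
proof (rule ccontr)
  assume "ss B = 0" "B \<noteq> {}"
  then obtain i where "i \<in> B" by auto
  have "0 < ss B" unfolding subsum_def
    by (rule suminf_pos2[OF summable_ind, of _ i]) (use \<open>i \<in> B\<close> in \<open>auto simp: tt_pos less_imp_le\<close>)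
  with \<open>ss B = 0\<close> show False by simp
qed

lemma ss_mono: "B \<subseteq> C \<Longrightarrow> ss B \<le> ss C"
proof -
  assume "B \<subseteq> C"
  then have "C = B \<union> (C - B)" by auto
  then have "ss C = ss B + ss (C - B)" using ss_union[of B "C - B"] by auto
  then show ?thesis using ss_nonneg[of "C - B"] by simp
qed

lemma ss_le1: "ss B \<le> 1" using ss_mono[of B UNIV] ss_UNIV by simp

lemma ss_finite: "finite F \<Longrightarrow> ss F = (\<Sum>n\<in>F. tt n)"
  unfolding subsum_def by (subst suminf_finite[of F]) auto

lemma sum_tt_atMost: "(\<Sum>n\<le>m. tt n) = 1 - (1/2)^Suc m"
  by (induction m) (auto simp: tt_def)

lemma ss_greater: "ss {m<..} = tt m"
proof -
  have u: "UNIV = {..m} \<union> {m<..}" by auto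
  have d: "{..m} \<inter> {m<..} = {}" by auto
  have "ss UNIV = ss {..m} + ss {m<..}" using ss_union[OF d] u by simp
  then show ?thesis using ss_UNIV ss_finite[of "{..m}"] sum_tt_atMost[of m] by (simp add: tt_def)
qed

lemma ss_single: "ss {m} = tt m" using ss_finite[of "{m}"] by simp

lemma ss_greater_eq: "C \<subseteq> {m<..} \<Longrightarrow> ss C = tt m \<Longrightarrow> C = {m<..}"
proof -
  assume a: "C \<subseteq> {m<..}" "ss C = tt m"
  then have "{m<..} = C \<union> ({m<..} - C)" by auto
  then have "ss {m<..} = ss C + ss ({m<..} - C)" using ss_union[of C "{m<..} - C"] by auto
  then have "ss ({m<..} - C) = 0" using a ss_greater by simp
  then have "{m<..} - C = {}" by (rule ss_zero)
  with a show ?thesis by auto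
qed

lemma pair_asym:
  assumes e: "ss B = ss C" and m: "m \<in> B" "m \<notin> C" and lt: "\<forall>n<m. (n \<in> B \<longleftrightarrow> n \<in> C)"
  shows "finite B \<and> \<not> finite C"
proof -
  define L where "L = B \<inter> {..<m}"
  have LC: "L = C \<inter> {..<m}" using lt unfolding L_def by blast
  define B' where "B' = B \<inter> {m<..}"
  define C' where "C' = C \<inter> {m<..}"
  have tri: "\<And>n. n < m \<or> n = m \<or> n > m" by arith
  have Bd: "B = L \<union> ({m} \<union> B')" unfolding L_def B'_def using m tri by fastforce
  have Cd: "C = L \<union> C'" unfolding LC C'_def using m tri by fastforce
  have d1: "L \<inter> ({m} \<union> B') = {}" "{m} \<inter> B' = {}" "L \<inter> C' = {}" unfolding L_def B'_def LC C'_def by auto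
  have sB: "ss B = ss L + (tt m + ss B')"
    using Bd ss_union[OF d1(1)] ss_union[OF d1(2)] ss_single[of m] by simp
  have sC: "ss C = ss L + ss C'"
    using Cd ss_union[OF d1(3)] by simp
  have "C' \<subseteq> {m<..}" unfolding C'_def by blast
  then have "ss C' \<le> tt m" using ss_mono[of C' "{m<..}"] ss_greater by simp
  with sB sC e have "ss B' \<le> 0" by simp
  then have "ss B' = 0" using ss_nonneg[of B'] by simp
  then have "B' = {}" by (rule ss_zero)
  then have "B \<subseteq> {..m}" using Bd unfolding L_def by auto
  then have fB: "finite B" using finite_subset by blast
  have "ss C' = tt m" using sB sC e \<open>ss B' = 0\<close> \<open>ss C' \<le> tt m\<close> by simp
  then have "C' = {m<..}" using \<open>C' \<subseteq> {m<..}\<close> by (intro ss_greater_eq) 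
  then have "{m<..} \<subseteq> C" unfolding C'_def by blast
  then have "\<not> finite C" using infinite_Ioi finite_subset by blast
  with fB show ?thesis by simp
qed

lemma pair:
  assumes e: "ss B = ss C" and ne: "B \<noteq> C"
  shows "(finite B \<and> \<not> finite C) \<or> (\<not> finite B \<and> finite C)"
proof -
  have "\<exists>n. (n \<in> B) \<noteq> (n \<in> C)" using ne by auto
  then obtain m where m: "(m \<in> B) \<noteq> (m \<in> C)" and lt: "\<forall>n<m. (n \<in> B \<longleftrightarrow> n \<in> C)"
    using exists_least_iff[of "\<lambda>n. (n \<in> B) \<noteq> (n \<in> C)"] by blast
  show ?thesis
  proof (cases "m \<in> B")
    case True then show ?thesis using pair_asym[OF e _ _ lt] m by auto
  next
    case False then show ?thesis using pair_asym[OF e[symmetric] _ _] m lt by auto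
  qed
qed



lemma floor_double: "\<lfloor>2 * x\<rfloor> = 2 * \<lfloor>x\<rfloor> \<or> \<lfloor>2 * x\<rfloor> = 2 * \<lfloor>x::real\<rfloor> + 1"
proof -
  have a: "real_of_int \<lfloor>x\<rfloor> \<le> x" "x < real_of_int \<lfloor>x\<rfloor> + 1" by linarith+
  have "2 * \<lfloor>x\<rfloor> \<le> \<lfloor>2 * x\<rfloor>" using a by (simp add: le_floor_iff)
  moreover have "\<lfloor>2 * x\<rfloor> < 2 * \<lfloor>x\<rfloor> + 2" using a by (simp add: floor_less_iff) linarith
  ultimately show ?thesis by linarith
qed

lemma exists_rep_lt1:
  assumes t0: "0 \<le> t" and t1: "t < 1"
  shows "\<exists>B. ss B = t"
proof -
  define a where "a n = \<lfloor>t * 2^n\<rfloor>" for n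
  define B where "B = {n. a (Suc n) = 2 * a n + 1}"
  define f where "f n = (if n \<in> B then tt n else 0)" for n
  have a0: "a 0 = 0" unfolding a_def using t0 t1 by (simp add: floor_eq_iff)
  have step: "a (Suc n) = 2 * a n \<or> a (Suc n) = 2 * a n + 1" for n
    using floor_double[of "t * 2^n"] unfolding a_def by (simp add: algebra_simps)
  have part: "(\<Sum>k<n. f k) = a n / 2^n" for n
  proof (induction n)
    case 0 then show ?case by (simp add: a0)
  next
    case (Suc n)
    have "(\<Sum>k<Suc n. f k) = a n / 2^n + f n" using Suc by simp
    also have "\<dots> = a (Suc n) / 2^Suc n"
      using step[of n] unfolding f_def B_def tt_def
      by (auto simp: field_simps)
    finally show ?case .
  qed
  have lo: "t - (1/2)^n \<le> a n / 2^n" for n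
  proof -
    have "t * 2^n - 1 \<le> a n" unfolding a_def by linarith
    then have "(t * 2^n - 1) / 2^n \<le> a n / 2^n" by (simp add: divide_right_mono)
    then show ?thesis by (simp add: field_simps power_divide)
  qed
  have hi: "a n / 2^n \<le> t" for n
  proof -
    have "a n \<le> t * 2^n" unfolding a_def by linarith
    then show ?thesis by (simp add: field_simps)
  qed
  have L: "(\<lambda>n. t - (1/2::real)^n) \<longlonglongrightarrow> t"
    using tendsto_diff[OF tendsto_const LIMSEQ_power_zero[of "1/2::real"], of t] by simp
  have "(\<lambda>n. a n / 2^n) \<longlonglongrightarrow> t"
    by (rule real_tendsto_sandwich[OF _ _ L tendsto_const]) (simp_all add: lo hi always_eventually)
  then have "f sums t" unfolding sums_def using part by simp
  then have "ss B = t" unfolding subsum_def f_def by (simp add: sums_unique[symmetric])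
  then show ?thesis by blast
qed

lemma exists_rep: "0 \<le> t \<Longrightarrow> t \<le> 1 \<Longrightarrow> \<exists>B. ss B = t"
  using exists_rep_lt1[of t] ss_UNIV by (cases "t = 1") auto

definition DD :: "real set" where "DD = {ss F | F. finite F \<and> F \<noteq> {}}"

definition Gn :: "real \<Rightarrow> nat" where
  "Gn t = (if t \<in> DD then 2 else if 0 \<le> t \<and> t \<le> 1 then 1 else 0)"

lemma partner:
  assumes "finite F" "F \<noteq> {}"
  shows "ss ((F - {Max F}) \<union> {Max F<..}) = ss F" and "\<not> finite ((F - {Max F}) \<union> {Max F<..})"
proof -
  let ?M = "Max F"
  have mem: "?M \<in> F" using assms by simp
  have le: "\<And>x. x \<in> F \<Longrightarrow> x \<le> ?M" using assms by simp
  have d1: "(F - {?M}) \<inter> {?M<..} = {}" using le by fastforce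
  have d2: "(F - {?M}) \<inter> {?M} = {}" by blast
  have "F = (F - {?M}) \<union> {?M}" using mem by blast
  then have "ss F = ss (F - {?M}) + tt ?M" using ss_union[OF d2] ss_single by metis
  then show "ss ((F - {Max F}) \<union> {Max F<..}) = ss F" using ss_union[OF d1] ss_greater by simp
  show "\<not> finite ((F - {Max F}) \<union> {Max F<..})" using infinite_Ioi by auto
qed

lemma sol_card: "finite {B. ss B = t} \<and> card {B. ss B = t} = Gn t"
proof (cases "t \<in> DD")
  case True
  then obtain F where F: "finite F" "F \<noteq> {}" "t = ss F" unfolding DD_def by blast
  define P where "P = (F - {Max F}) \<union> {Max F<..}"
  have P: "ss P = t" "\<not> finite P" using partner[OF F(1,2)] F(3) unfolding P_def by auto
  have "{B. ss B = t} = {F, P}"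
  proof
    show "{F, P} \<subseteq> {B. ss B = t}" using P F by auto
    show "{B. ss B = t} \<subseteq> {F, P}"
    proof
      fix B assume "B \<in> {B. ss B = t}"
      then have B: "ss B = t" by simp
      show "B \<in> {F, P}"
      proof (rule ccontr)
        assume "B \<notin> {F, P}"
        then have "B \<noteq> F" "B \<noteq> P" by auto
        from pair[of B F] B F(3) \<open>B \<noteq> F\<close> have "\<not> finite B" using F(1) by auto
        moreover from pair[of B P] B P \<open>B \<noteq> P\<close> have "finite B" by auto
        ultimately show False by simp
      qed
    qed
  qed
  moreover have "F \<noteq> P" using F(1) P(2) by auto
  ultimately show ?thesis using True unfolding Gn_def by simp
next
  case False
  show ?thesis
  proof (cases "0 \<le> t \<and> t \<le> 1")
    case True
    then obtain B0 where B0: "ss B0 = t" using exists_rep by blast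
    have "{B. ss B = t} = {B0}"
    proof
      show "{B0} \<subseteq> {B. ss B = t}" using B0 by auto
      show "{B. ss B = t} \<subseteq> {B0}"
      proof
        fix B assume "B \<in> {B. ss B = t}"
        then have B: "ss B = t" by simp
        show "B \<in> {B0}"
        proof (rule ccontr)
          assume "B \<notin> {B0}"
          then have ne: "B \<noteq> B0" by simp
          have key: "X = Y" if "ss X = t" "ss Y = t" "finite X" for X Y
          proof -
            have "X = {}" using that False unfolding DD_def by blast
            then have "t = 0" using that ss_finite by simp
            then have "Y = {}" using that ss_zero by simp
            then show ?thesis using \<open>X = {}\<close> by simp
          qed
          from pair[of B B0] B B0 ne have "finite B \<or> finite B0" by auto
          then show False using key[of B B0] key[of B0 B] B B0 ne by auto
        qed
      qed
    qed
    then show ?thesis using False True unfolding Gn_def by simp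
  next
    case False2: False
    have "{B. ss B = t} = {}" using False2 ss_nonneg ss_le1 by force
    then show ?thesis using False False2 unfolding Gn_def by simp
  qed
qed



definition xs :: "real list \<Rightarrow> nat \<Rightarrow> real" where
  "xs p n = (if n < length p then p ! n else tt (n - length p))"

definition sg :: "real list \<Rightarrow> nat set \<Rightarrow> real" where
  "sg p F = (\<Sum>n\<in>F. p ! n)"

lemma subsum_split:
  "subsum (xs p) A = sg p (A \<inter> {..<length p}) + ss {m. m + length p \<in> A}"
proof -
  let ?k = "length p"
  define f where "f n = (if n \<in> A then xs p n else 0)" for n
  have sh: "(\<lambda>n. f (n + ?k)) = (\<lambda>n. if n \<in> {m. m + ?k \<in> A} then tt n else 0)"
    unfolding f_def xs_def by auto
  have "summable (\<lambda>n. f (n + ?k))" unfolding sh by (rule summable_ind)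
  then have sf: "summable f" by (simp add: summable_iff_shift)
  have "subsum (xs p) A = suminf f" unfolding subsum_def f_def ..
  also have "\<dots> = (\<Sum>n. f (n + ?k)) + (\<Sum>i<?k. f i)" by (rule suminf_split_initial_segment[OF sf])
  also have "(\<Sum>i<?k. f i) = sg p (A \<inter> {..<?k})"
    unfolding sg_def f_def xs_def by (simp add: sum.inter_restrict[symmetric] Int_commute)
  finally show ?thesis unfolding sh subsum_def by simp
qed

definition hh :: "nat \<Rightarrow> nat set \<times> nat set \<Rightarrow> nat set" where
  "hh k = (\<lambda>(F, B). F \<union> (\<lambda>m. m + k) ` B)"

lemma hh_low: "F \<subseteq> {..<k} \<Longrightarrow> hh k (F, B) \<inter> {..<k} = F"
  unfolding hh_def by auto

lemma hh_high: "F \<subseteq> {..<k} \<Longrightarrow> {m. m + k \<in> hh k (F, B)} = B"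
  unfolding hh_def by auto

lemma sol_eq:
  "{A. subsum (xs p) A = y} = hh (length p) ` (SIGMA F:Pow {..<length p}. {B. ss B = y - sg p F})"
  (is "?L = ?R")
proof
  let ?k = "length p"
  show "?L \<subseteq> ?R"
  proof
    fix A assume "A \<in> ?L"
    then have e: "subsum (xs p) A = y" by simp
    have "A = hh ?k (A \<inter> {..<?k}, {m. m + ?k \<in> A})"
    proof
      show "A \<subseteq> hh ?k (A \<inter> {..<?k}, {m. m + ?k \<in> A})"
      proof
        fix n assume n: "n \<in> A"
        show "n \<in> hh ?k (A \<inter> {..<?k}, {m. m + ?k \<in> A})"
        proof (cases "n < ?k")
          case True then show ?thesis using n unfolding hh_def by simp
        next
          case False
          then have "n = (n - ?k) + ?k" by simp
          then have "n \<in> (\<lambda>m. m + ?k) ` {m. m + ?k \<in> A}" using n by (intro image_eqI[where x="n - ?k"]) auto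
          then show ?thesis unfolding hh_def by simp
        qed
      qed
      show "hh ?k (A \<inter> {..<?k}, {m. m + ?k \<in> A}) \<subseteq> A" unfolding hh_def by auto
    qed
    moreover have "(A \<inter> {..<?k}, {m. m + ?k \<in> A}) \<in> (SIGMA F:Pow {..<?k}. {B. ss B = y - sg p F})"
      using e subsum_split[of p A] by auto
    ultimately show "A \<in> ?R" by blast
  qed
  show "?R \<subseteq> ?L"
  proof
    fix A assume "A \<in> ?R"
    then obtain F B where FB: "F \<subseteq> {..<?k}" "ss B = y - sg p F" "A = hh ?k (F, B)" by auto
    have 1: "A \<inter> {..<?k} = F" using FB hh_low by simp
    have 2: "{m. m + ?k \<in> A} = B" using FB hh_high by simp
    show "A \<in> ?L" using subsum_split[of p A] 1 2 FB by simp
  qed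
qed

lemma hh_inj: "inj_on (hh k) (Pow {..<k} \<times> UNIV)"
proof (rule inj_onI)
  fix x y assume x: "x \<in> Pow {..<k} \<times> UNIV" and y: "y \<in> Pow {..<k} \<times> UNIV" and e: "hh k x = hh k y"
  obtain F B where xF: "x = (F, B)" by (cases x)
  obtain G C where yG: "y = (G, C)" by (cases y)
  have F: "F \<subseteq> {..<k}" using x xF by simp
  have G: "G \<subseteq> {..<k}" using y yG by simp
  have "F = G" using hh_low[OF F, of B] hh_low[OF G, of C] e xF yG by simp
  moreover have "B = C" using hh_high[OF F, of B] hh_high[OF G, of C] e xF yG by simp
  ultimately show "x = y" using xF yG by simp
qed

definition Cnt :: "real list \<Rightarrow> real \<Rightarrow> nat" where
  "Cnt p y = (\<Sum>F\<in>Pow {..<length p}. Gn (y - sg p F))"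

lemma sol_finite_card:
  "finite {A. subsum (xs p) A = y} \<and> card {A. subsum (xs p) A = y} = Cnt p y"
proof -
  let ?S = "SIGMA F:Pow {..<length p}. {B. ss B = y - sg p F}"
  have inj: "inj_on (hh (length p)) ?S" using hh_inj by (rule inj_on_subset) auto
  have fin: "finite ?S" using sol_card by (intro finite_SigmaI) auto
  have "card ?S = Cnt p y" unfolding Cnt_def using sol_card by (subst card_SigmaI) auto
  moreover have "card (hh (length p) ` ?S) = card ?S" using inj by (rule card_image)
  ultimately show ?thesis unfolding sol_eq using fin by simp
qed

lemma cf_eq: "cardinal_function (xs p) y = Fin (Cnt p y)"
  unfolding cardinal_function_def cardval_of_def using sol_finite_card by simp

lemma ach_iff: "y \<in> achievement_set (xs p) \<longleftrightarrow> 0 < Cnt p y"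
proof -
  have "y \<in> achievement_set (xs p) \<longleftrightarrow> {A. subsum (xs p) A = y} \<noteq> {}"
    unfolding achievement_set_def by auto
  also have "\<dots> \<longleftrightarrow> 0 < Cnt p y" using sol_finite_card[of p y] by (metis card_gt_0_iff)
  finally show ?thesis .
qed

lemma I1_intro:
  assumes pos: "\<forall>n<length p. p ! n > 0"
    and ab: "a \<le> b" and iv: "\<And>y. 0 < Cnt p y \<longleftrightarrow> a \<le> y \<and> y \<le> b"
    and R: "(\<lambda>y. Fin (Cnt p y)) ` {a..b} = R"
  shows "R \<in> I1"
proof -
  have "summable (\<lambda>n. xs p (n + length p))" unfolding xs_def using summable_tt by simp
  then have sm: "summable (xs p)" by (simp add: summable_iff_shift)
  have ps: "\<forall>n. xs p n > 0" using pos tt_pos unfolding xs_def by auto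
  have A: "achievement_set (xs p) = {a..b}" using ach_iff iv by auto
  have "cardinal_function (xs p) ` achievement_set (xs p) = R" unfolding A using R cf_eq by simp
  then show ?thesis unfolding I1_def using sm ps ab A by blast
qed



lemma DD_range: "t \<in> DD \<Longrightarrow> 0 < t \<and> t < 1"
proof -
  assume "t \<in> DD"
  then obtain F where F: "finite F" "F \<noteq> {}" "t = ss F" unfolding DD_def by blast
  have "ss F \<noteq> 0" using F ss_zero by blast
  then have p: "0 < ss F" using ss_nonneg[of F] by simp
  have "- F \<noteq> {}"
  proof
    assume "- F = {}"
    then have "F = UNIV" by auto
    with F(1) show False by simp
  qed
  then have "ss (- F) \<noteq> 0" using ss_zero by blast
  then have q: "0 < ss (- F)" using ss_nonneg[of "- F"] by simp
  have u: "F \<union> - F = UNIV" by auto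
  have "ss UNIV = ss F + ss (- F)" using ss_union[of F "- F"] u by simp
  with q p F(3) ss_UNIV show ?thesis by simp
qed

definition dyadic :: "real \<Rightarrow> bool" where
  "dyadic t \<longleftrightarrow> (\<exists>k::int. \<exists>N::nat. t * 2^N = of_int k)"

lemma tt_mult: "n < N \<Longrightarrow> tt n * 2^N = 2^(N - Suc n)"
proof -
  assume "n < N"
  then have "N = (N - Suc n) + Suc n" by simp
  then have "(2::real)^N = 2^(N - Suc n) * 2^Suc n" by (metis power_add)
  then show ?thesis unfolding tt_def by (simp add: power_divide field_simps)
qed

lemma sum_tt_int: "finite F \<Longrightarrow> \<forall>n\<in>F. n < N \<Longrightarrow> \<exists>k::int. (\<Sum>n\<in>F. tt n) * 2^N = of_int k"
proof (induction F rule: finite_induct)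
  case empty then show ?case by simp
next
  case (insert x F)
  then obtain k :: int where k: "(\<Sum>n\<in>F. tt n) * 2^N = of_int k" by auto
  have "(\<Sum>n\<in>insert x F. tt n) * 2^N = tt x * 2^N + (\<Sum>n\<in>F. tt n) * 2^N"
    using insert by (simp add: algebra_simps)
  also have "\<dots> = of_int (2^(N - Suc x) + k)" using tt_mult[of x N] insert k by simp
  finally show ?case by blast
qed

lemma DD_dyadic: "t \<in> DD \<Longrightarrow> dyadic t"
proof -
  assume "t \<in> DD"
  then obtain F where F: "finite F" "t = ss F" unfolding DD_def by blast
  obtain N where "\<forall>n\<in>F. n < N" using finite_nat_bounded[OF F(1)] by auto
  then obtain k :: int where "(\<Sum>n\<in>F. tt n) * 2^N = of_int k" using sum_tt_int[OF F(1)] by blast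
  then show ?thesis using F ss_finite unfolding dyadic_def by auto
qed

lemma dyadic_diff: "dyadic a \<Longrightarrow> dyadic b \<Longrightarrow> dyadic (a - b)"
proof -
  assume "dyadic a" "dyadic b"
  then obtain k l :: int and N M :: nat where kl: "a * 2^N = k" "b * 2^M = l" unfolding dyadic_def by blast
  have "(a - b) * 2^(N + M) = (a * 2^N) * 2^M - (b * 2^M) * 2^N" by (simp add: power_add algebra_simps)
  also have "\<dots> = of_int (k * 2^M - l * 2^N)" using kl by simp
  finally show ?thesis unfolding dyadic_def by blast
qed

lemma coprime32: "coprime (3::int) (2^N)"
proof -
  have "coprime (3::int) 2" by (simp add: coprime_iff_gcd_eq_1 gcd_red_int[of 3 2])
  then show ?thesis by simp
qed

lemma not_dyadic: "\<not> (3::int) dvd m \<Longrightarrow> \<not> dyadic (of_int m / (3 * 2^j))"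
proof
  assume n3: "\<not> (3::int) dvd m" and "dyadic (of_int m / (3 * 2^j))"
  then obtain k :: int and N where "of_int m / (3 * 2^j) * 2^N = (of_int k :: real)" unfolding dyadic_def by blast
  then have "(of_int m :: real) * 2^N = of_int (3 * 2^j * k)" by (simp add: field_simps)
  then have "m * 2^N = 3 * 2^j * k" by (metis of_int_eq_iff of_int_mult of_int_numeral of_int_power)
  then have "(3::int) dvd m * 2^N" by simp
  then have "(3::int) dvd m" using coprime32[of N] by (simp add: coprime_dvd_mult_left_iff)
  with n3 show False by simp
qed

lemma nd_1_3: "\<not> dyadic (1/3)" using not_dyadic[of 1 0] by simp
lemma nd_2_3: "\<not> dyadic (2/3)" using not_dyadic[of 2 0] by simp
lemma nd_1_6: "\<not> dyadic (1/6)" using not_dyadic[of 1 1] by simp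
lemma nd_7_6: "\<not> dyadic (7/6)" using not_dyadic[of 7 1] by simp
lemma nd_1_12: "\<not> dyadic (1/12)" using not_dyadic[of 1 2] by simp

lemma not_both: "a \<in> DD \<Longrightarrow> b \<in> DD \<Longrightarrow> a - b = c \<Longrightarrow> \<not> dyadic c \<Longrightarrow> False"
  using DD_dyadic dyadic_diff by blast

lemma nd_notin: "\<not> dyadic t \<Longrightarrow> t \<notin> DD" using DD_dyadic by blast

lemma DD_up: "u \<in> DD \<Longrightarrow> u < 1/2 \<Longrightarrow> u + 1/2 \<in> DD"
proof -
  assume "u \<in> DD" "u < 1/2"
  then obtain F where F: "finite F" "F \<noteq> {}" "u = ss F" unfolding DD_def by blast
  have "0 \<notin> F"
  proof
    assume "0 \<in> F"
    then have "ss {0} \<le> ss F" using ss_mono by simp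
    with ss_single[of 0] F \<open>u < 1/2\<close> show False by (simp add: tt_def)
  qed
  then have d: "F \<inter> {0} = {}" by auto
  have "ss (F \<union> {0}) = u + 1/2" using ss_union[OF d] ss_single[of 0] F by (simp add: tt_def)
  then show ?thesis unfolding DD_def using F by (metis (mono_tags, lifting) Un_empty finite_Un finite.emptyI finite.insertI mem_Collect_eq)
qed

lemma DD_down: "u \<in> DD \<Longrightarrow> u > 1/2 \<Longrightarrow> u - 1/2 \<in> DD"
proof -
  assume "u \<in> DD" "u > 1/2"
  then obtain F where F: "finite F" "F \<noteq> {}" "u = ss F" unfolding DD_def by blast
  have "0 \<in> F"
  proof (rule ccontr)
    assume "0 \<notin> F"
    then have "F \<subseteq> {0<..}" by (auto intro: gr0I)
    then have "ss F \<le> ss {0<..}" using ss_mono by simp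
    with ss_greater[of 0] F \<open>u > 1/2\<close> show False by (simp add: tt_def)
  qed
  have d: "(F - {0}) \<inter> {0} = {}" by auto
  have "F = (F - {0}) \<union> {0}" using \<open>0 \<in> F\<close> by auto
  then have e: "ss F = ss (F - {0}) + 1/2" using ss_union[OF d] ss_single[of 0] by (simp add: tt_def)
  have "F - {0} \<noteq> {}"
  proof
    assume "F - {0} = {}"
    then have "ss (F - {0}) = 0" using ss_finite[of "{}"] by (simp only:) simp
    then show False using e F \<open>u > 1/2\<close> by simp
  qed
  then show ?thesis unfolding DD_def using F e by auto
qed

lemma DD_fin: "finite F \<Longrightarrow> F \<noteq> {} \<Longrightarrow> (\<Sum>n\<in>F. tt n) = t \<Longrightarrow> t \<in> DD"
  unfolding DD_def using ss_finite by auto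

lemma DD_v0: "1/2 \<in> DD" by (rule DD_fin[of "{0}"]) (simp_all add: tt_def power_divide)
lemma DD_v1: "1/4 \<in> DD" by (rule DD_fin[of "{1}"]) (simp_all add: tt_def power_divide)
lemma DD_v2: "3/4 \<in> DD" by (rule DD_fin[of "{0,1}"]) (simp_all add: tt_def power_divide)
lemma DD_v3: "1/8 \<in> DD" by (rule DD_fin[of "{2}"]) (simp_all add: tt_def power_divide)
lemma DD_v4: "5/8 \<in> DD" by (rule DD_fin[of "{0,2}"]) (simp_all add: tt_def power_divide)
lemma DD_v5: "3/8 \<in> DD" by (rule DD_fin[of "{1,2}"]) (simp_all add: tt_def power_divide)
lemma DD_v6: "7/8 \<in> DD" by (rule DD_fin[of "{0,1,2}"]) (simp_all add: tt_def power_divide)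
lemmas DD_vals = DD_v0 DD_v1 DD_v2 DD_v3 DD_v4 DD_v5 DD_v6

lemma Gn_eq: "Gn t = (if t \<in> DD then 2 else if 0 \<le> t \<and> t \<le> 1 then 1 else 0)" by (simp add: Gn_def)

lemma Gn_pos: "0 < Gn t \<longleftrightarrow> 0 \<le> t \<and> t \<le> 1"
  using DD_range[of t] unfolding Gn_def by auto

lemma Cnt1: "Cnt [a] y = Gn y + Gn (y - a)"
proof -
  have "Pow {..<length [a]} = {{}, {0}}" by (auto simp: lessThan_Suc)
  then show ?thesis unfolding Cnt_def sg_def by simp
qed

lemma Cnt2: "Cnt [a, b] y = Gn y + Gn (y - a) + Gn (y - b) + Gn (y - (a + b))"
proof -
  have "{..<length [a, b]} = {0, 1}" by auto
  then have "Pow {..<length [a, b]} = {{}, {0}, {1}, {0, 1}}" by (simp add: Pow_insert insert_commute)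
  then show ?thesis unfolding Cnt_def sg_def by simp
qed



lemma Gn_2: "t \<in> DD \<Longrightarrow> Gn t = 2" by (simp add: Gn_def)
lemma Gn_1: "t \<notin> DD \<Longrightarrow> 0 \<le> t \<Longrightarrow> t \<le> 1 \<Longrightarrow> Gn t = 1" by (simp add: Gn_def)
lemma Gn_0: "t < 0 \<or> 1 < t \<Longrightarrow> Gn t = 0" using DD_range[of t] by (auto simp: Gn_def)
lemma not01: "(0::real) \<notin> DD" "(1::real) \<notin> DD" using DD_range by force+

lemma Gn_le2: "Gn t \<le> 2" by (simp add: Gn_def)
lemma Gn_eq2: "Gn t = 2 \<longleftrightarrow> t \<in> DD" by (simp add: Gn_def)
lemma Gn_ge1: "0 \<le> t \<Longrightarrow> t \<le> 1 \<Longrightarrow> 1 \<le> Gn t" using Gn_pos[of t] by simp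

lemma ex1: "{Fin 1, Fin 2, Fin 3} \<in> I1"
proof (rule I1_intro[where p="[1/3]" and a=0 and b="4/3"])
  show "\<forall>n<length [1/3::real]. [1/3::real] ! n > 0" by simp
  show "(0::real) \<le> 4/3" by simp
  fix y :: real
  show "0 < Cnt [1/3] y \<longleftrightarrow> 0 \<le> y \<and> y \<le> 4/3"
    unfolding Cnt1 using Gn_pos[of y] Gn_pos[of "y - 1/3"] by auto
next
  show "(\<lambda>y. Fin (Cnt [1/3] y)) ` {0..4/3} = {Fin 1, Fin 2, Fin 3}"
  proof
    show "(\<lambda>y. Fin (Cnt [1/3] y)) ` {0..4/3} \<subseteq> {Fin 1, Fin 2, Fin 3}"
    proof
      fix z assume "z \<in> (\<lambda>y. Fin (Cnt [1/3] y)) ` {0..4/3}"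
      then obtain y where y: "0 \<le> y" "y \<le> 4/3" "z = Fin (Gn y + Gn (y - 1/3))" by (auto simp: Cnt1)
      have nb: "\<not> (y \<in> DD \<and> y - 1/3 \<in> DD)" using not_both[of y "y - 1/3" "1/3"] nd_1_3 by auto
      have lo: "1 \<le> Gn y \<or> 1 \<le> Gn (y - 1/3)" using y(1,2) Gn_ge1[of y] Gn_ge1[of "y - 1/3"] by linarith
      have "\<not> (Gn y = 2 \<and> Gn (y - 1/3) = 2)" using nb Gn_eq2 by blast
      then have "Gn y + Gn (y - 1/3) \<in> {1, 2, 3}" using lo Gn_le2[of y] Gn_le2[of "y - 1/3"] by auto
      then show "z \<in> {Fin 1, Fin 2, Fin 3}" using y by auto
    qed
    have "Fin 1 = Fin (Cnt [1/3] 0)" unfolding Cnt1 using Gn_1[of 0] Gn_0[of "-1/3"] not01 by simp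
    moreover have "Fin 2 = Fin (Cnt [1/3] (1/3))" unfolding Cnt1
      using Gn_1[of 0] Gn_1[of "1/3"] not01 nd_notin[OF nd_1_3] by simp
    moreover have "Fin 3 = Fin (Cnt [1/3] (1/2))" unfolding Cnt1
      using Gn_2[of "1/2"] Gn_1[of "1/6"] DD_vals nd_notin[OF nd_1_6] by simp
    ultimately show "{Fin 1, Fin 2, Fin 3} \<subseteq> (\<lambda>y. Fin (Cnt [1/3] y)) ` {0..4/3}" by auto
  qed
qed

lemmas Gsimps = Gn_2 Gn_1 Gn_0 DD_vals not01 nd_notin[OF nd_1_3] nd_notin[OF nd_2_3]
  nd_notin[OF nd_1_6] nd_notin[OF nd_1_12]

lemma ex2: "{Fin 1, Fin 2, Fin 3, Fin 4} \<in> I1"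
proof (rule I1_intro[where p="[1/2]" and a=0 and b="3/2"])
  show "\<forall>n<length [1/2::real]. [1/2::real] ! n > 0" by simp
  show "(0::real) \<le> 3/2" by simp
  fix y :: real
  show "0 < Cnt [1/2] y \<longleftrightarrow> 0 \<le> y \<and> y \<le> 3/2"
    unfolding Cnt1 using Gn_pos[of y] Gn_pos[of "y - 1/2"] by auto
next
  show "(\<lambda>y. Fin (Cnt [1/2] y)) ` {0..3/2} = {Fin 1, Fin 2, Fin 3, Fin 4}"
  proof
    show "(\<lambda>y. Fin (Cnt [1/2] y)) ` {0..3/2} \<subseteq> {Fin 1, Fin 2, Fin 3, Fin 4}"
    proof
      fix z assume "z \<in> (\<lambda>y. Fin (Cnt [1/2] y)) ` {0..3/2}"
      then obtain y where y: "0 \<le> y" "y \<le> 3/2" "z = Fin (Gn y + Gn (y - 1/2))" by (auto simp: Cnt1)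
      have lo: "1 \<le> Gn y \<or> 1 \<le> Gn (y - 1/2)" using y(1,2) Gn_ge1[of y] Gn_ge1[of "y - 1/2"] by linarith
      then have "Gn y + Gn (y - 1/2) \<in> {1, 2, 3, 4}" using Gn_le2[of y] Gn_le2[of "y - 1/2"] by auto
      then show "z \<in> {Fin 1, Fin 2, Fin 3, Fin 4}" using y by auto
    qed
    have "Fin 1 = Fin (Cnt [1/2] 0)" unfolding Cnt1 by (simp add: Gsimps)
    moreover have "Fin 2 = Fin (Cnt [1/2] (1/4))" unfolding Cnt1 by (simp add: Gsimps)
    moreover have "Fin 3 = Fin (Cnt [1/2] (1/2))" unfolding Cnt1 by (simp add: Gsimps)
    moreover have "Fin 4 = Fin (Cnt [1/2] (3/4))" unfolding Cnt1 by (simp add: Gsimps)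
    ultimately show "{Fin 1, Fin 2, Fin 3, Fin 4} \<subseteq> (\<lambda>y. Fin (Cnt [1/2] y)) ` {0..3/2}" by auto
  qed
qed

lemma C3: "Cnt [1/2, 2/3] y = Gn y + Gn (y - 1/2) + Gn (y - 2/3) + Gn (y - 7/6)"
  unfolding Cnt2 by simp

lemma ex3: "{Fin 1, Fin 2, Fin 3, Fin 4, Fin 5} \<in> I1"
proof (rule I1_intro[where p="[1/2, 2/3]" and a=0 and b="13/6"])
  show "\<forall>n<length [1/2::real, 2/3]. [1/2::real, 2/3] ! n > 0" 
  proof (intro allI impI)
    fix n :: nat assume "n < length [1/2::real, 2/3]"
    then have "n < 2" by simp
    then have "n = 0 \<or> n = 1" by linarith
    then show "0 < ([1/2, 2/3] :: real list) ! n" by (elim disjE) simp_all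
  qed
  show "(0::real) \<le> 13/6" by simp
  fix y :: real
  show "0 < Cnt [1/2, 2/3] y \<longleftrightarrow> 0 \<le> y \<and> y \<le> 13/6"
    unfolding C3 using Gn_pos[of y] Gn_pos[of "y - 1/2"] Gn_pos[of "y - 2/3"] Gn_pos[of "y - 7/6"] by auto
next
  let ?f = "\<lambda>y. Fin (Cnt [1/2, 2/3] y)"
  show "?f ` {0..13/6} = {Fin 1, Fin 2, Fin 3, Fin 4, Fin 5}"
  proof
    show "?f ` {0..13/6} \<subseteq> {Fin 1, Fin 2, Fin 3, Fin 4, Fin 5}"
    proof
      fix z assume "z \<in> ?f ` {0..13/6}"
      then obtain y where y: "0 \<le> y" "y \<le> 13/6" "z = Fin (Gn y + Gn (y - 1/2) + Gn (y - 2/3) + Gn (y - 7/6))" by (auto simp: C3)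
      have n1: "\<not> (y \<in> DD \<and> y - 2/3 \<in> DD)" using not_both[of y "y - 2/3" "2/3"] nd_2_3 by auto
      have n2: "\<not> (y - 1/2 \<in> DD \<and> y - 2/3 \<in> DD)" using not_both[of "y - 1/2" "y - 2/3" "1/6"] nd_1_6 by auto
      have n3: "\<not> (y - 1/2 \<in> DD \<and> y - 7/6 \<in> DD)" using not_both[of "y - 1/2" "y - 7/6" "2/3"] nd_2_3 by auto
      have lo: "1 \<le> Gn y \<or> 1 \<le> Gn (y - 1/2) \<or> 1 \<le> Gn (y - 7/6)"
        using y(1,2) Gn_ge1[of y] Gn_ge1[of "y - 1/2"] Gn_ge1[of "y - 7/6"] by linarith
      have ad: "Gn y = 0 \<or> Gn (y - 7/6) = 0" using Gn_0[of y] Gn_0[of "y - 7/6"] by linarith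
      have m1: "\<not> (Gn y = 2 \<and> Gn (y - 2/3) = 2)" using n1 Gn_eq2 by blast
      have m2: "\<not> (Gn (y - 1/2) = 2 \<and> Gn (y - 2/3) = 2)" using n2 Gn_eq2 by blast
      have m3: "\<not> (Gn (y - 1/2) = 2 \<and> Gn (y - 7/6) = 2)" using n3 Gn_eq2 by blast
      have "Gn y + Gn (y - 1/2) + Gn (y - 2/3) + Gn (y - 7/6) \<le> 5"
        using ad m1 m2 m3 Gn_le2[of y] Gn_le2[of "y - 1/2"] Gn_le2[of "y - 2/3"] Gn_le2[of "y - 7/6"] by linarith
      then have "Gn y + Gn (y - 1/2) + Gn (y - 2/3) + Gn (y - 7/6) \<in> {1, 2, 3, 4, 5}" using lo by auto
      then show "z \<in> {Fin 1, Fin 2, Fin 3, Fin 4, Fin 5}" using y by auto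
    qed
    have "Fin 1 = ?f 0" unfolding C3 by (simp add: Gsimps)
    moreover have "Fin 2 = ?f (1/4)" unfolding C3 by (simp add: Gsimps)
    moreover have "Fin 3 = ?f (1/2)" unfolding C3 by (simp add: Gsimps)
    moreover have "Fin 4 = ?f 1" unfolding C3 by (simp add: Gsimps)
    moreover have "Fin 5 = ?f (3/4)" unfolding C3 by (simp add: Gsimps)
    ultimately show "{Fin 1, Fin 2, Fin 3, Fin 4, Fin 5} \<subseteq> ?f ` {0..13/6}" by auto
  qed
qed

lemma C4: "Cnt [1/2, 1/2] y = Gn y + Gn (y - 1/2) + Gn (y - 1/2) + Gn (y - 1)"
  unfolding Cnt2 by simp

lemma ex4: "{Fin 1, Fin 2, Fin 3, Fin 4, Fin 6} \<in> I1"
proof (rule I1_intro[where p="[1/2, 1/2]" and a=0 and b=2])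
  show "\<forall>n<length [1/2::real, 1/2]. [1/2::real, 1/2] ! n > 0" 
  proof (intro allI impI)
    fix n :: nat assume "n < length [1/2::real, 1/2]"
    then have "n < 2" by simp
    then have "n = 0 \<or> n = 1" by linarith
    then show "0 < ([1/2, 1/2] :: real list) ! n" by (elim disjE) simp_all
  qed
  show "(0::real) \<le> 2" by simp
  fix y :: real
  show "0 < Cnt [1/2, 1/2] y \<longleftrightarrow> 0 \<le> y \<and> y \<le> 2"
    unfolding C4 using Gn_pos[of y] Gn_pos[of "y - 1/2"] Gn_pos[of "y - 1"] by auto
next
  let ?f = "\<lambda>y. Fin (Cnt [1/2, 1/2] y)"
  show "?f ` {0..2} = {Fin 1, Fin 2, Fin 3, Fin 4, Fin 6}"
  proof
    show "?f ` {0..2} \<subseteq> {Fin 1, Fin 2, Fin 3, Fin 4, Fin 6}"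
    proof
      fix z assume "z \<in> ?f ` {0..2}"
      then obtain y where y: "0 \<le> y" "y \<le> 2" "z = Fin (Gn y + Gn (y - 1/2) + Gn (y - 1/2) + Gn (y - 1))" by (auto simp: C4)
      have f1: "y \<in> DD \<Longrightarrow> y > 1/2 \<Longrightarrow> y - 1/2 \<in> DD" using DD_down[of y] by simp
      have f2: "y - 1/2 \<in> DD \<Longrightarrow> y - 1/2 < 1/2 \<Longrightarrow> y \<in> DD" using DD_up[of "y - 1/2"] by simp
      have f3: "y - 1/2 \<in> DD \<Longrightarrow> y - 1/2 > 1/2 \<Longrightarrow> y - 1 \<in> DD" using DD_down[of "y - 1/2"] by simp
      have lo: "1 \<le> Gn y \<or> 1 \<le> Gn (y - 1)" using y(1,2) Gn_ge1[of y] Gn_ge1[of "y - 1"] by linarith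
      have ac: "Gn y + Gn (y - 1) \<le> 2"
      proof (cases "y < 1")
        case True then show ?thesis using Gn_0[of "y - 1"] Gn_le2[of y] by simp
      next
        case False
        show ?thesis
        proof (cases "y = 1")
          case True then show ?thesis using not01 by (simp add: Gn_1)
        next
          case False2: False
          then show ?thesis using False Gn_0[of y] Gn_le2[of "y - 1"] by simp
        qed
      qed
      have bd: "y - 1/2 \<in> DD \<Longrightarrow> Gn y + Gn (y - 1) = 2"
      proof -
        assume b: "y - 1/2 \<in> DD"
        have br: "0 < y - 1/2" "y - 1/2 < 1" using DD_range[OF b] by auto
        show ?thesis
        proof (cases "y < 1")
          case True
          then have "y \<in> DD" using f2 b by simp
          then show ?thesis using True Gn_0[of "y - 1"] Gn_2 by simp
        next
          case False
          show ?thesis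
          proof (cases "y = 1")
            case True then show ?thesis using not01 by (simp add: Gn_1)
          next
            case False2: False
            then have "y - 1 \<in> DD" using f3 b False by simp
            then show ?thesis using False False2 Gn_0[of y] Gn_2 by simp
          qed
        qed
      qed
      have "Gn y + Gn (y - 1/2) + Gn (y - 1/2) + Gn (y - 1) \<in> {1, 2, 3, 4, 6}"
      proof (cases "y - 1/2 \<in> DD")
        case True then show ?thesis using bd Gn_2[OF True] by simp
      next
        case False
        then have "Gn (y - 1/2) \<le> 1" using Gn_le2[of "y - 1/2"] Gn_eq2[of "y - 1/2"] by linarith
        then show ?thesis using ac lo by auto
      qed
      then show "z \<in> {Fin 1, Fin 2, Fin 3, Fin 4, Fin 6}" using y by auto
    qed
    have "Fin 1 = ?f 0" unfolding C4 by (simp add: Gsimps)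
    moreover have "Fin 2 = ?f (1/4)" unfolding C4 by (simp add: Gsimps)
    moreover have "Fin 3 = ?f (2/3)" unfolding C4 by (simp add: Gsimps)
    moreover have "Fin 4 = ?f (1/2)" unfolding C4 by (simp add: Gsimps)
    moreover have "Fin 6 = ?f (3/4)" unfolding C4 by (simp add: Gsimps)
    ultimately show "{Fin 1, Fin 2, Fin 3, Fin 4, Fin 6} \<subseteq> ?f ` {0..2}" by auto
  qed
qed

lemma C5: "Cnt [3/4, 1/2] y = Gn y + Gn (y - 3/4) + Gn (y - 1/2) + Gn (y - 5/4)"
  unfolding Cnt2 by simp

lemma ex5: "{Fin 1, Fin 2, Fin 3, Fin 4, Fin 5, Fin 6} \<in> I1"
proof (rule I1_intro[where p="[3/4, 1/2]" and a=0 and b="9/4"])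
  show "\<forall>n<length [3/4::real, 1/2]. [3/4::real, 1/2] ! n > 0" 
  proof (intro allI impI)
    fix n :: nat assume "n < length [3/4::real, 1/2]"
    then have "n < 2" by simp
    then have "n = 0 \<or> n = 1" by linarith
    then show "0 < ([3/4, 1/2] :: real list) ! n" by (elim disjE) simp_all
  qed
  show "(0::real) \<le> 9/4" by simp
  fix y :: real
  show "0 < Cnt [3/4, 1/2] y \<longleftrightarrow> 0 \<le> y \<and> y \<le> 9/4"
    unfolding C5 using Gn_pos[of y] Gn_pos[of "y - 3/4"] Gn_pos[of "y - 1/2"] Gn_pos[of "y - 5/4"] by auto
next
  let ?f = "\<lambda>y. Fin (Cnt [3/4, 1/2] y)"
  show "?f ` {0..9/4} = {Fin 1, Fin 2, Fin 3, Fin 4, Fin 5, Fin 6}"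
  proof
    show "?f ` {0..9/4} \<subseteq> {Fin 1, Fin 2, Fin 3, Fin 4, Fin 5, Fin 6}"
    proof
      fix z assume "z \<in> ?f ` {0..9/4}"
      then obtain y where y: "0 \<le> y" "y \<le> 9/4" "z = Fin (Gn y + Gn (y - 3/4) + Gn (y - 1/2) + Gn (y - 5/4))" by (auto simp: C5)
      have lo: "1 \<le> Gn y \<or> 1 \<le> Gn (y - 1/2) \<or> 1 \<le> Gn (y - 5/4)"
        using y(1,2) Gn_ge1[of y] Gn_ge1[of "y - 1/2"] Gn_ge1[of "y - 5/4"] by linarith
      have ad: "Gn y = 0 \<or> Gn (y - 5/4) = 0" using Gn_0[of y] Gn_0[of "y - 5/4"] by linarith
      have "Gn y + Gn (y - 3/4) + Gn (y - 1/2) + Gn (y - 5/4) \<le> 6"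
        using ad Gn_le2[of y] Gn_le2[of "y - 3/4"] Gn_le2[of "y - 1/2"] Gn_le2[of "y - 5/4"] by linarith
      then have "Gn y + Gn (y - 3/4) + Gn (y - 1/2) + Gn (y - 5/4) \<in> {1, 2, 3, 4, 5, 6}" using lo by auto
      then show "z \<in> {Fin 1, Fin 2, Fin 3, Fin 4, Fin 5, Fin 6}" using y by auto
    qed
    have "Fin 1 = ?f 0" unfolding C5 by (simp add: Gsimps)
    moreover have "Fin 2 = ?f (1/4)" unfolding C5 by (simp add: Gsimps)
    moreover have "Fin 3 = ?f (1/2)" unfolding C5 by (simp add: Gsimps)
    moreover have "Fin 4 = ?f (5/8)" unfolding C5 by (simp add: Gsimps)
    moreover have "Fin 5 = ?f 1" unfolding C5 by (simp add: Gsimps)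
    moreover have "Fin 6 = ?f (7/8)" unfolding C5 by (simp add: Gsimps)
    ultimately show "{Fin 1, Fin 2, Fin 3, Fin 4, Fin 5, Fin 6} \<subseteq> ?f ` {0..9/4}" by auto
  qed
qed

theorem proposition7p2:
  shows "{Fin 1, Fin 2, Fin 3} \<in> I1 \<and>
    {Fin 1, Fin 2, Fin 3, Fin 4} \<in> I1 \<and>
    {Fin 1, Fin 2, Fin 3, Fin 4, Fin 5} \<in> I1 \<and>
    {Fin 1, Fin 2, Fin 3, Fin 4, Fin 6} \<in> I1 \<and>
    {Fin 1, Fin 2, Fin 3, Fin 4, Fin 5, Fin 6} \<in> I1"
  using ex1 ex2 ex3 ex4 ex5 by blast

end
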